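(* Let $X$ be a fixed finite set, let $p \in (0,1)$ and $\delta_B \in (0,1)$. For a finite set $Y$, let $\mathcal M_Y(Y) = |X \cap Y_{\mathrm{sub}}|$, where $Y_{\mathrm{sub}} \subseteq Y$ includes each element of $Y$ independently with probability $p$. Set $$L = \frac{\left(\sqrt{\tfrac12\log\tfrac{2}{\delta_B}} + \sqrt{\tfrac12\log\tfrac{2}{\delta_B} + 16(1-p)\log\tfrac{4}{\delta_B}}\right)^2}{16(1-p)^2}.$$ If $|I| > L$, where $I = X\cap Y$, then $\mathcal M_Y$ provides $(\epsilon_B, \delta_B)$-differential privacy for $Y$, i.e. for every $Y'$ neighboring $Y$ and every set $W$ of outputs, $\Pr[\mathcal M_Y(Y)\in W] \le e^{\epsilon_B}\Pr[\mathcal M_Y(Y')\in W] + \delta_B$, where $$\epsilon_B = \frac{2\sqrt{t\log\frac{4}{\delta_B}} + 1}{t - \sqrt{t\log\frac{4}{\delta_B}}}, \qquad t = (1-p)|I| - \sqrt{\frac{|I|}{8}\log\frac{2}{\delta_B}}.$$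
   Context: $\log$ is the natural logarithm. Neighboring sets are in the bounded sense: $Y'$ is obtained from $Y$ by replacing exactly one element by another element (so $|Y'|=|Y|$); the set $X$ is held fixed. *)

theory Defs
  imports "HOL-Probability.Probability"
begin

definition subsample_pmf :: "real \<Rightarrow> 'a set \<Rightarrow> 'a set pmf" where
  "subsample_pmf p Y = map_pmf (\<lambda>f. {y \<in> Y. f y}) (Pi_pmf Y False (\<lambda>_. bernoulli_pmf p))"

definition mech_Y :: "'a set \<Rightarrow> real \<Rightarrow> 'a set \<Rightarrow> nat pmf" where
  "mech_Y X p Y = map_pmf (\<lambda>S. card (X \<inter> S)) (subsample_pmf p Y)"

definition neighbour_bounded :: "'a set \<Rightarrow> 'a set \<Rightarrow> bool" where
  "neighbour_bounded Y Y' \<longleftrightarrow> (\<exists>a b. a \<in> Y \<and> b \<notin> Y \<and> Y' = insert b (Y - {a}))"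

definition L_bound :: "real \<Rightarrow> real \<Rightarrow> real" where
  "L_bound p \<delta> =
     (sqrt (1/2 * ln (2/\<delta>)) + sqrt (1/2 * ln (2/\<delta>) + 16 * (1 - p) * ln (4/\<delta>)))^2
     / (16 * (1 - p)^2)"

definition t_param :: "real \<Rightarrow> real \<Rightarrow> nat \<Rightarrow> real" where
  "t_param p \<delta> n = (1 - p) * real n - sqrt (real n / 8 * ln (2/\<delta>))"

definition eps_B :: "real \<Rightarrow> real \<Rightarrow> nat \<Rightarrow> real" where
  "eps_B p \<delta> n = (let t = t_param p \<delta> n in
     (2 * sqrt (t * ln (4/\<delta>)) + 1) / (t - sqrt (t * ln (4/\<delta>))))"

end

theory Submission
  imports Defs
begin


lemma mech_binomial:
  assumes "finite Y" "p \<in> {0..1}"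
  shows "mech_Y X p Y = binomial_pmf (card (X \<inter> Y)) p"
proof -
  have fin: "finite (X \<inter> Y)" using assms by auto
  have "mech_Y X p Y = map_pmf (\<lambda>f. card (X \<inter> {y\<in>Y. f y})) (Pi_pmf Y False (\<lambda>_. bernoulli_pmf p))"
    unfolding mech_Y_def subsample_pmf_def by (simp add: pmf.map_comp o_def)
  also have "\<dots> = map_pmf (\<lambda>g. card {x\<in>X \<inter> Y. g x})
      (map_pmf (\<lambda>f x. if x \<in> X \<inter> Y then f x else False) (Pi_pmf Y False (\<lambda>_. bernoulli_pmf p)))"
    unfolding pmf.map_comp o_def
    by (intro pmf.map_cong refl arg_cong[where f=card]) auto
  also have "map_pmf (\<lambda>f x. if x \<in> X \<inter> Y then f x else False) (Pi_pmf Y False (\<lambda>_. bernoulli_pmf p))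
      = Pi_pmf (X \<inter> Y) False (\<lambda>_. bernoulli_pmf p)"
    by (rule Pi_pmf_subset[symmetric]) (use assms in auto)
  also have "map_pmf (\<lambda>g. card {x\<in>X \<inter> Y. g x}) \<dots> = binomial_pmf (card (X \<inter> Y)) p"
    by (rule binomial_pmf_altdef'[symmetric]) (use fin assms in auto)
  finally show ?thesis .
qed

lemma dp_pointwise:
  fixes P Q :: "nat pmf"
  assumes fin: "finite (set_pmf P)" and c: "c \<ge> 0"
    and pw: "\<And>k. k \<in> set_pmf P \<Longrightarrow> k \<notin> B \<Longrightarrow> pmf P k \<le> c * pmf Q k"
  shows "measure_pmf.prob P W \<le> c * measure_pmf.prob Q W + measure_pmf.prob P B"
proof -
  define A where "A = W \<inter> set_pmf P"
  have finA: "finite A" using fin by (auto simp: A_def)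
  have "measure_pmf.prob P W = measure_pmf.prob P A"
    unfolding A_def by (simp add: measure_Int_set_pmf)
  also have "\<dots> = sum (pmf P) A" using finA by (simp add: measure_measure_pmf_finite)
  also have "\<dots> = sum (pmf P) (A - B) + sum (pmf P) (A \<inter> B)"
    using sum.Int_Diff[OF finA, of "pmf P" B] by simp
  also have "sum (pmf P) (A - B) \<le> sum (\<lambda>k. c * pmf Q k) (A - B)"
    by (intro sum_mono pw) (auto simp: A_def)
  also have "\<dots> = c * measure_pmf.prob Q (A - B)"
    using finA by (simp add: sum_distrib_left measure_measure_pmf_finite)
  also have "\<dots> \<le> c * measure_pmf.prob Q W"
    by (intro mult_left_mono c measure_pmf.finite_measure_mono) (auto simp: A_def)
  also have "sum (pmf P) (A \<inter> B) = measure_pmf.prob P (A \<inter> B)"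
    using finA by (simp add: measure_measure_pmf_finite)
  also have "\<dots> \<le> measure_pmf.prob P B"
    by (intro measure_pmf.finite_measure_mono) auto
  finally show ?thesis by simp
qed

lemma binom_tail:
  fixes n :: nat and p la c :: real
  assumes p: "0 < p" "p < 1"
    and B: "\<And>k. k \<in> B \<Longrightarrow> k \<le> n \<Longrightarrow> la * c \<le> la * real (n - k)"
  shows "measure_pmf.prob (binomial_pmf n p) B \<le> exp (- la * c + real n * (1 - p) * (exp la - 1))"
proof -
  let ?P = "binomial_pmf n p"
  have "measure_pmf.prob ?P B = measure_pmf.prob ?P (B \<inter> {..n})"
    using measure_Int_set_pmf[of ?P B] p by simp
  also have "\<dots> = sum (pmf ?P) (B \<inter> {..n})" by (simp add: measure_measure_pmf_finite)
  also have "\<dots> \<le> sum (\<lambda>k. pmf ?P k * exp (la * real (n - k) - la * c)) (B \<inter> {..n})"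
  proof (intro sum_mono)
    fix k assume k: "k \<in> B \<inter> {..n}"
    have "1 \<le> exp (la * real (n - k) - la * c)" using B[of k] k by simp
    then show "pmf ?P k \<le> pmf ?P k * exp (la * real (n - k) - la * c)"
      using mult_left_mono[of 1 _ "pmf ?P k"] by simp
  qed
  also have "\<dots> \<le> sum (\<lambda>k. pmf ?P k * exp (la * real (n - k) - la * c)) {..n}"
    by (intro sum_mono2) auto
  also have "\<dots> = exp (- la * c) * (\<Sum>k\<le>n. of_nat (n choose k) * p ^ k * ((1 - p) * exp la) ^ (n - k))"
    unfolding sum_distrib_left
  proof (intro sum.cong refl)
    fix k assume k: "k \<in> {..n}"
    have e: "exp (la * real (n - k) - la * c) = exp (- la * c) * exp la ^ (n - k)"
      by (simp add: exp_diff exp_minus exp_of_nat2_mult[symmetric] field_simps)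
    show "pmf ?P k * exp (la * real (n - k) - la * c) =
          exp (- la * c) * (of_nat (n choose k) * p ^ k * ((1 - p) * exp la) ^ (n - k))"
      unfolding e using p by (simp add: power_mult_distrib pmf_binomial)
  qed
  also have "(\<Sum>k\<le>n. of_nat (n choose k) * p ^ k * ((1 - p) * exp la) ^ (n - k)) = (p + (1 - p) * exp la) ^ n"
    by (subst binomial_ring) (simp add: atLeast0AtMost)
  also have "(p + (1 - p) * exp la) ^ n \<le> exp ((1 - p) * (exp la - 1)) ^ n"
  proof (rule power_mono)
    show "p + (1 - p) * exp la \<le> exp ((1 - p) * (exp la - 1))"
      using exp_ge_add_one_self[of "(1 - p) * (exp la - 1)"] by (simp add: algebra_simps)
    show "0 \<le> p + (1 - p) * exp la" using p by (simp add: add_nonneg_nonneg)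
  qed
  also have "exp ((1 - p) * (exp la - 1)) ^ n = exp (real n * (1 - p) * (exp la - 1))"
    by (simp add: exp_of_nat_mult[symmetric] mult.assoc)
  finally show ?thesis
    by (simp add: exp_add[symmetric] mult_left_mono)
qed




lemma key_ineq:
  fixes l t s e :: real
  assumes l: "l > 0" and tl: "t > l" and s: "s = sqrt (t * l)"
    and e: "e = (2 * s + 1) / (t - s)"
  shows "t * e^2 \<ge> l * (2 + 2 * e + e^2)" and "e > 0"
proof -
  have s2: "s^2 = t * l" using s tl l by simp
  have s0: "s > 0" using s tl l by simp
  have sl: "s > l"
  proof -
    have "l^2 < t * l" using tl l by (simp add: power2_eq_square)
    then have "sqrt (l^2) < sqrt (t * l)" by (rule real_sqrt_less_mono)
    then show ?thesis using s l by simp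
  qed
  have ts: "t > s"
  proof -
    have "t * l < t^2" using tl l by (simp add: power2_eq_square)
    then have "sqrt (t * l) < sqrt (t^2)" by (rule real_sqrt_less_mono)
    then show ?thesis using s l tl by simp
  qed
  have h1: "e * (t - s) = 2 * s + 1" using e ts by simp
  show ep: "e > 0" using e ts s0 by simp
  have h0: "(t - l) * s = (s + l) * (t - s)" using s2 by (simp add: algebra_simps power2_eq_square)
  have "(t - l) * e * s = ((t - l) * s) * e" by (simp only: mult_ac)
  also have "\<dots> = (s + l) * (e * (t - s))" unfolding h0 by (simp only: mult_ac)
  also have "\<dots> = (s + l) * (2 * s + 1)" unfolding h1 ..
  finally have "(t - l) * e * s = (s + l) * (2 * s + 1)" .
  also have "\<dots> \<ge> 2 * (s + l) * s" using s0 l by (simp add: algebra_simps)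
  finally have h2: "(t - l) * e \<ge> 2 * (s + l)" using s0 by (simp add: mult_le_cancel_right)
  have "s * e * (t - s) = s * (2 * s + 1)" using h1 by (simp add: mult.assoc)
  also have "\<dots> \<ge> l * (t - s)"
  proof -
    have eq1: "l * (t - s) = s * s - l * s" using s2 by (simp add: algebra_simps power2_eq_square)
    have ls: "l * s > 0" using s0 l by simp
    have ss: "s * s > 0" using s0 by simp
    have eq2: "s * (2 * s + 1) = 2 * (s * s) + s" by (simp add: algebra_simps)
    show ?thesis using eq1 ls ss eq2 s0 by linarith
  qed
  finally have h3: "s * e \<ge> l" using ts by (simp add: mult_le_cancel_right)
  have A: "t * e^2 = l * e^2 + ((t - l) * e) * e" by (simp add: algebra_simps power2_eq_square)
  have Bq: "((t - l) * e) * e \<ge> (2 * (s + l)) * e" using h2 ep by (simp add: mult_right_mono)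
  have C: "(2 * (s + l)) * e = 2 * (l * e) + 2 * (s * e)" by (simp add: algebra_simps)
  have D: "l * (2 + 2 * e + e^2) = 2 * l + 2 * (l * e) + l * e^2" by (simp add: algebra_simps)
  show "t * e^2 \<ge> l * (2 + 2 * e + e^2)" using A Bq C D h3 by linarith
qed




lemma exp_low:
  fixes e :: real assumes "e \<ge> 0"
  shows "1 - (1 + e) * exp (- e) \<ge> e^2 / (2 + 2 * e + e^2)"
proof -
  have q: "1 + e + e^2/2 \<le> exp e" by (rule exp_lower_Taylor_quadratic) fact
  have pos: "1 + e + e^2/2 > 0" using assms by (simp add: add_pos_nonneg)
  have "(1 + e) * exp (- e) = (1 + e) / exp e" by (simp add: exp_minus field_simps)
  also have "\<dots> \<le> (1 + e) / (1 + e + e^2/2)"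
    using q pos assms by (intro divide_left_mono) auto
  finally have "1 - (1 + e) * exp (- e) \<ge> 1 - (1 + e) / (1 + e + e^2/2)" by simp
  also have "1 - (1 + e) / (1 + e + e^2/2) = e^2 / (2 + 2 * e + e^2)"
    using pos by (simp add: field_simps)
  finally show ?thesis .
qed




lemma exp_up:
  fixes e :: real assumes e: "e \<ge> 0"
  shows "1 + (e - 1) * exp e \<ge> e^2 / 2"
proof (cases "e \<ge> 1")
  case True
  have q: "1 + e + e^2/2 \<le> exp e" by (rule exp_lower_Taylor_quadratic) fact
  have "(e - 1) * (1 + e + e^2/2) \<le> (e - 1) * exp e" using True q by (intro mult_left_mono) auto
  moreover have "(e - 1) * (1 + e + e^2/2) = e^3/2 + e^2/2 - 1" by (simp add: field_simps power2_eq_square power3_eq_cube)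
  moreover have "e^3 \<ge> 0" using e by simp
  ultimately show ?thesis by linarith
next
  case False
  obtain z where "\<bar>z\<bar> \<le> \<bar>-e\<bar>" and ez: "exp (-e) = (\<Sum>m<4. ((-e) ^ m) / fact m) + (exp z / fact 4) * (-e) ^ 4"
    using Maclaurin_exp_le[of "-e" 4] by blast
  have "(exp z / fact 4) * (-e) ^ 4 \<ge> 0" by simp
  moreover have "(\<Sum>m<4. ((-e) ^ m) / fact m) = 1 - e + e^2/2 - e^3/6"
    by (simp add: numeral_eq_Suc fact_numeral power2_eq_square power3_eq_cube)
  ultimately have lb: "exp (-e) \<ge> 1 - e + e^2/2 - e^3/6" using ez by linarith
  have "e * e \<le> 1 * e" using False e by (intro mult_right_mono) auto
  then have p1: "1 - e^2/2 > 0" using False by (simp add: power2_eq_square)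
  have "(1 - e^2/2) * (1 - e + e^2/2 - e^3/6) \<ge> 1 - e"
  proof -
    have "(1 - e^2/2) * (1 - e + e^2/2 - e^3/6) - (1 - e) = e^3 * (1/3 - e/4 + e^2/12)"
      by (simp add: field_simps power2_eq_square power3_eq_cube)
    moreover have "e^3 * (1/3 - e/4 + e^2/12) \<ge> 0"
    proof (rule mult_nonneg_nonneg)
      show "0 \<le> e^3" using e by simp
      have "0 \<le> e^2" by simp
      then show "0 \<le> 1/3 - e/4 + e^2/12" using False by linarith
    qed
    ultimately show ?thesis by linarith
  qed
  also have "(1 - e^2/2) * (1 - e + e^2/2 - e^3/6) \<le> (1 - e^2/2) * exp (-e)"
    using lb p1 by (intro mult_left_mono) auto
  finally have "(1 - e) * exp e \<le> (1 - e^2/2) * exp (-e) * exp e"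
    by (simp add: mult_right_mono)
  also have "\<dots> = 1 - e^2/2" by (simp add: exp_minus)
  finally show ?thesis by (simp add: algebra_simps)
qed





lemma L_imp:
  fixes p \<delta> :: real and n :: nat
  assumes p: "0 < p" "p < 1" and d: "0 < \<delta>" "\<delta> < 1"
    and nL: "real n > L_bound p \<delta>"
  shows "t_param p \<delta> n > ln (4 / \<delta>)"
proof -
  define q where "q = 1 - p"
  define l2 where "l2 = ln (2 / \<delta>)"
  define l where "l = ln (4 / \<delta>)"
  have q0: "q > 0" using p by (simp add: q_def)
  have l2p: "l2 > 0" using d by (simp add: l2_def)
  have lp: "l > 0" using d by (simp add: l_def)
  define a where "a = sqrt (l2 / 8)"
  define R where "R = sqrt (a^2 + 4 * q * l)"
  define r where "r = (a + R) / (2 * q)"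
  have a0: "a \<ge> 0" using l2p by (simp add: a_def)
  have a2: "a^2 = l2 / 8" unfolding a_def by (rule real_sqrt_pow2) (use l2p in linarith)
  have R2: "R^2 = a^2 + 4 * q * l" using q0 lp by (simp add: R_def add_nonneg_nonneg)
  have Ra: "R > a"
  proof -
    have "sqrt (a^2) < R" unfolding R_def using q0 lp by (intro real_sqrt_less_mono) simp
    then show ?thesis using a0 by simp
  qed
  have e1: "sqrt (1/2 * l2) = 2 * a"
    by (rule real_sqrt_unique) (use a2 a0 in \<open>simp_all add: power_mult_distrib\<close>)
  have e2: "sqrt (1/2 * l2 + 16 * q * l) = 2 * R"
    by (rule real_sqrt_unique) (use R2 a2 Ra a0 in \<open>simp_all add: power_mult_distrib\<close>)
  have Lr: "L_bound p \<delta> = r^2"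
    unfolding L_bound_def r_def
    using e1 e2 q0 by (simp add: l2_def l_def q_def[symmetric] power_divide power2_eq_square field_simps)
  have r0: "r > 0" using Ra a0 q0 by (simp add: r_def)
  define x where "x = sqrt (real n)"
  have xr: "x > r" unfolding x_def using nL Lr by (intro real_less_rsqrt) simp
  have x2: "x^2 = real n" by (simp add: x_def)
  have t_eq: "t_param p \<delta> n = x * (q * x - a)"
  proof -
    have "sqrt (real n / 8 * l2) = x * a"
      by (simp add: x_def a_def real_sqrt_mult[symmetric])
    then show ?thesis
      unfolding t_param_def using x2 by (simp add: l2_def q_def algebra_simps power2_eq_square)
  qed
  have rl: "r * (q * r - a) = l"
  proof -
    have "q * r - a = (R - a) / 2" using q0 by (simp add: r_def field_simps)
    then have "r * (q * r - a) = (R^2 - a^2) / (4 * q)"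
      using q0 by (simp add: r_def field_simps power2_eq_square)
    then show ?thesis using R2 q0 by simp
  qed
  have "r * (q * r - a) < x * (q * x - a)"
  proof (rule mult_strict_mono)
    show "r < x" by fact
    show "q * r - a < q * x - a" using xr q0 by simp
    show "0 < x" using xr r0 by simp
    show "0 \<le> q * r - a" using Ra q0 by (simp add: r_def field_simps)
  qed
  then show ?thesis using rl t_eq by (simp add: l_def)
qed




lemma binom_dp:
  fixes n n' :: nat and p \<delta> t :: real
  assumes p: "0 < p" "p < 1" and d: "0 < \<delta>" "\<delta> < 1"
    and tl: "t > ln (4 / \<delta>)" and tm: "t \<le> real n * (1 - p)"
    and n': "n' = n \<or> (n \<ge> 1 \<and> n' = n - 1) \<or> n' = n + 1"
  shows "measure_pmf.prob (binomial_pmf n p) W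
     \<le> exp ((2 * sqrt (t * ln (4 / \<delta>)) + 1) / (t - sqrt (t * ln (4 / \<delta>))))
         * measure_pmf.prob (binomial_pmf n' p) W + \<delta>"
proof -
  define l where "l = ln (4 / \<delta>)"
  define s where "s = sqrt (t * l)"
  define e where "e = (2 * s + 1) / (t - s)"
  define q where "q = 1 - p"
  define \<mu> where "\<mu> = real n * q"
  have q0: "q > 0" "q < 1" using p by (auto simp: q_def)
  have l1: "l \<ge> 1"
  proof -
    have "\<delta> * exp 1 \<le> 1 * 3" using exp_le d by (intro mult_mono) auto
    then have "exp 1 \<le> 4 / \<delta>" using d by (simp add: field_simps)
    then show ?thesis unfolding l_def using d by (subst ln_ge_iff) auto
  qed
  have tl': "t > l" using tl by (simp add: l_def)
  have key: "t * e^2 \<ge> l * (2 + 2 * e + e^2)" and e0: "e > 0"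
    using key_ineq[of l t s e] l1 tl' by (auto simp: s_def e_def)
  have el: "exp (- l) = \<delta> / 4" using d by (simp add: l_def exp_minus exp_ln)
  have mut: "\<mu> \<ge> t" using tm by (simp add: \<mu>_def q_def)
  have t0: "t > 0" using tl' l1 by simp
  have eq: "(2 * sqrt (t * ln (4 / \<delta>)) + 1) / (t - sqrt (t * ln (4 / \<delta>))) = e"
    by (simp add: e_def s_def l_def)
  let ?P = "binomial_pmf n p"
  have finP: "finite (set_pmf ?P)" using p by simp
  have ee: "exp e \<ge> 0" by simp
  have pmfP: "pmf ?P k = real (n choose k) * p ^ k * q ^ (n - k)" for k
    using p by (simp add: q_def)
  have pmfQ: "pmf (binomial_pmf m p) k = real (m choose k) * p ^ k * q ^ (m - k)" for m k
    using p by (simp add: q_def)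
  consider "n' = n" | "n \<ge> 1" "n' = n - 1" | "n' = n + 1" using n' by blast
  then have "measure_pmf.prob ?P W \<le> exp e * measure_pmf.prob (binomial_pmf n' p) W + \<delta>"
  proof cases
    case 1
    have "1 \<le> exp e" using e0 by simp
    then have "measure_pmf.prob ?P W \<le> exp e * measure_pmf.prob ?P W"
      using mult_right_mono[of 1 "exp e" "measure_pmf.prob ?P W"] by simp
    then show ?thesis using 1 d by simp
  next
    case 2
    define B where "B = {k. real (n - k) * exp e < \<mu>}"
    have "measure_pmf.prob ?P W \<le> exp e * measure_pmf.prob (binomial_pmf n' p) W + measure_pmf.prob ?P B"
    proof (rule dp_pointwise[OF finP ee])
      fix k assume k: "k \<in> set_pmf ?P" "k \<notin> B"
      have kn: "k \<le> n" using k p by simp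
      have ge: "real (n - k) * exp e \<ge> \<mu>" using k by (simp add: B_def not_less)
      have "\<mu> > 0" using mut t0 by simp
      then have "real (n - k) > 0" using ge by (metis mult_eq_0_iff not_less of_nat_0 order_le_less_trans mult_nonneg_nonneg order_less_irrefl exp_ge_zero less_eq_real_def of_nat_0_le_iff)
      then have kn': "k < n" by simp
      have comb: "real (n - k) * real (n choose k) = real n * real ((n - 1) choose k)"
        using binomial_absorb_comp[of n k] by (metis of_nat_mult)
      have qq: "q ^ (n - k) = q * q ^ (n - 1 - k)"
        using kn' by (metis Suc_diff_Suc diff_Suc_1 diff_diff_left  power_Suc plus_1_eq_Suc)
      have "pmf ?P k * real (n - k) = \<mu> * pmf (binomial_pmf n' p) k"
        unfolding pmfP pmfQ 2 \<mu>_def qq using comb by (simp add: algebra_simps)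
      also have "\<dots> \<le> real (n - k) * exp e * pmf (binomial_pmf n' p) k"
        using ge by (intro mult_right_mono) auto
      finally have "real (n - k) * pmf ?P k \<le> real (n - k) * (exp e * pmf (binomial_pmf n' p) k)"
        by (simp only: mult_ac)
      then show "pmf ?P k \<le> exp e * pmf (binomial_pmf n' p) k"
        using \<open>real (n - k) > 0\<close> by (rule mult_left_le_imp_le)
    qed
    also have "measure_pmf.prob ?P B \<le> exp (- (- e) * (\<mu> * exp (- e)) + real n * (1 - p) * (exp (- e) - 1))"
    proof (rule binom_tail[OF p])
      fix k assume k: "k \<in> B" "k \<le> n"
      have "real (n - k) * exp e < \<mu>" using k by (simp add: B_def)
      then have "real (n - k) < \<mu> * exp (- e)" by (simp add: exp_minus field_simps)
      then show "- e * (\<mu> * exp (- e)) \<le> - e * real (n - k)" using e0 by simp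
    qed
    also have "- (- e) * (\<mu> * exp (- e)) + real n * (1 - p) * (exp (- e) - 1)
               = - \<mu> * (1 - (1 + e) * exp (- e))"
      by (simp add: \<mu>_def q_def algebra_simps)
    also have "\<dots> \<le> - l"
    proof -
      have X0: "e^2 / (2 + 2 * e + e^2) \<ge> 0" using e0 by simp
      have "\<mu> * (1 - (1 + e) * exp (- e)) \<ge> \<mu> * (e^2 / (2 + 2 * e + e^2))"
        using exp_low[of e] e0 mut t0 by (intro mult_left_mono) auto
      moreover have "\<mu> * (e^2 / (2 + 2 * e + e^2)) \<ge> t * (e^2 / (2 + 2 * e + e^2))"
        using mut X0 by (intro mult_right_mono) auto
      moreover have "t * (e^2 / (2 + 2 * e + e^2)) \<ge> l"
      proof -
        have pos: "2 + 2 * e + e^2 > 0" using e0 by (simp add: add_pos_nonneg)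
        show ?thesis using key pos by (simp add: field_simps)
      qed
      ultimately show ?thesis by linarith
    qed
    finally have "measure_pmf.prob ?P W \<le> exp e * measure_pmf.prob (binomial_pmf n' p) W + exp (- l)"
      by simp
    then show ?thesis using el d by simp
  next
    case 3
    define B where "B = {k. real (n + 1 - k) > real (n + 1) * q * exp e}"
    have "measure_pmf.prob ?P W \<le> exp e * measure_pmf.prob (binomial_pmf n' p) W + measure_pmf.prob ?P B"
    proof (rule dp_pointwise[OF finP ee])
      fix k assume k: "k \<in> set_pmf ?P" "k \<notin> B"
      have kn: "k \<le> n" using k p by simp
      have le: "real (n + 1 - k) \<le> real (n + 1) * q * exp e" using k by (simp add: B_def not_less)
      have comb: "real (n + 1 - k) * real ((n + 1) choose k) = real (n + 1) * real (n choose k)"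
        using binomial_absorb_comp[of "n + 1" k] by (metis of_nat_mult diff_add_inverse2)
      have qq: "q ^ (n + 1 - k) = q * q ^ (n - k)"
        using kn by (simp add: Suc_diff_le)
      have "real (n + 1 - k) * pmf (binomial_pmf n' p) k
          = (real (n + 1 - k) * real ((n + 1) choose k)) * (p ^ k * q * q ^ (n - k))"
        unfolding pmfQ 3 qq by (simp only: mult_ac)
      also have "\<dots> = pmf ?P k * (real (n + 1) * q)"
        unfolding comb pmfP by (simp only: mult_ac)
      finally have "pmf ?P k * (real (n + 1) * q) = real (n + 1 - k) * pmf (binomial_pmf n' p) k" ..
      also have "\<dots> \<le> real (n + 1) * q * exp e * pmf (binomial_pmf n' p) k"
        using le by (intro mult_right_mono) auto
      finally have "(real (n + 1) * q) * pmf ?P k \<le> (real (n + 1) * q) * (exp e * pmf (binomial_pmf n' p) k)"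
        by (simp only: mult_ac)
      moreover have "real (n + 1) * q > 0" using q0 by simp
      ultimately show "pmf ?P k \<le> exp e * pmf (binomial_pmf n' p) k"
        by (rule mult_left_le_imp_le)
    qed
    also have "measure_pmf.prob ?P B \<le> exp (- e * (\<mu> * exp e - 1) + real n * (1 - p) * (exp e - 1))"
    proof (rule binom_tail[OF p])
      fix k assume k: "k \<in> B" "k \<le> n"
      have "real (n + 1 - k) > real (n + 1) * q * exp e" using k by (simp add: B_def)
      moreover have "real (n + 1) * q * exp e \<ge> \<mu> * exp e"
        using q0 by (simp add: \<mu>_def algebra_simps)
      moreover have "real (n + 1 - k) = real (n - k) + 1" using k by simp
      ultimately have "real (n - k) > \<mu> * exp e - 1" by linarith
      then show "e * (\<mu> * exp e - 1) \<le> e * real (n - k)" using e0 by simp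
    qed
    also have "- e * (\<mu> * exp e - 1) + real n * (1 - p) * (exp e - 1)
               = e - \<mu> * (1 + (e - 1) * exp e)"
      by (simp add: \<mu>_def q_def algebra_simps)
    also have "\<dots> \<le> - l"
    proof -
      have g: "1 + (e - 1) * exp e \<ge> e^2 / 2" using exp_up[of e] e0 by simp
      have "\<mu> * (1 + (e - 1) * exp e) \<ge> t * (e^2 / 2)"
      proof -
        have "\<mu> * (1 + (e - 1) * exp e) \<ge> \<mu> * (e^2 / 2)"
          using g mut t0 by (intro mult_left_mono) auto
        moreover have "\<mu> * (e^2 / 2) \<ge> t * (e^2 / 2)" using mut by (intro mult_right_mono) auto
        ultimately show ?thesis by linarith
      qed
      moreover have "t * (e^2 / 2) \<ge> l + e"
      proof -
        have "l * e \<ge> e" using l1 e0 by simp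
        moreover have "l * e^2 \<ge> 0" using l1 by simp
        ultimately have "l * (2 + 2 * e + e^2) \<ge> 2 * l + 2 * e" by (simp add: algebra_simps)
        then show ?thesis using key by simp
      qed
      ultimately show ?thesis by linarith
    qed
    finally have "measure_pmf.prob ?P W \<le> exp e * measure_pmf.prob (binomial_pmf n' p) W + exp (- l)"
      by simp
    then show ?thesis using el d by simp
  qed
  then show ?thesis unfolding eq .
qed




theorem theorem2:
  fixes X Y :: "'a set" and p \<delta> :: real
  assumes "finite X" and "finite Y"
    and "0 < p" "p < 1" and "0 < \<delta>" "\<delta> < 1"
    and "real (card (X \<inter> Y)) > L_bound p \<delta>"
  shows "\<forall>Y' W. neighbour_bounded Y Y' \<longrightarrow>
           measure_pmf.prob (mech_Y X p Y) W
             \<le> exp (eps_B p \<delta> (card (X \<inter> Y))) * measure_pmf.prob (mech_Y X p Y') W + \<delta>"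
proof (intro allI impI)
  fix Y' W assume nb: "neighbour_bounded Y Y'"
  then obtain a b where ab: "a \<in> Y" "b \<notin> Y" "Y' = insert b (Y - {a})"
    unfolding neighbour_bounded_def by blast
  define n where "n = card (X \<inter> Y)"
  define t where "t = t_param p \<delta> n"
  have p01: "p \<in> {0..1}" using assms by auto
  have finY': "finite Y'" using ab assms by simp
  have m1: "mech_Y X p Y = binomial_pmf n p" unfolding n_def by (rule mech_binomial) (use assms p01 in auto)
  have m2: "mech_Y X p Y' = binomial_pmf (card (X \<inter> Y')) p" by (rule mech_binomial) (use finY' p01 in auto)
  have "ln (2 / \<delta>) \<ge> 0" using assms by simp
  then have tm: "t \<le> real n * (1 - p)" unfolding t_def t_param_def by simp
  have tl: "t > ln (4 / \<delta>)" unfolding t_def n_def by (rule L_imp) (use assms in auto)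
  have epsq: "eps_B p \<delta> n = (2 * sqrt (t * ln (4 / \<delta>)) + 1) / (t - sqrt (t * ln (4 / \<delta>)))"
    by (simp add: eps_B_def t_def Let_def)
  have finXY: "finite (X \<inter> Y)" using assms by simp
  have XY': "X \<inter> Y' = (if b \<in> X then insert b (X \<inter> Y - {a}) else X \<inter> Y - {a})"
    using ab by auto
  have cd: "card (X \<inter> Y - {a}) = (if a \<in> X then n - 1 else n)"
    using ab by (simp add: n_def card_Diff_singleton_if)
  have bn: "b \<notin> X \<inter> Y - {a}" using ab by simp
  have cY': "card (X \<inter> Y') = (if a \<in> X then n - 1 else n) + (if b \<in> X then 1 else 0)"
    using finXY bn cd by (simp add: XY')
  have n1: "a \<in> X \<Longrightarrow> n \<ge> 1"
    using ab finXY by (simp add: n_def Suc_le_eq card_gt_0_iff) blast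
  have n': "card (X \<inter> Y') = n \<or> (n \<ge> 1 \<and> card (X \<inter> Y') = n - 1) \<or> card (X \<inter> Y') = n + 1"
    using cY' n1 by auto
  show "measure_pmf.prob (mech_Y X p Y) W
          \<le> exp (eps_B p \<delta> (card (X \<inter> Y))) * measure_pmf.prob (mech_Y X p Y') W + \<delta>"
    unfolding m1 m2 n_def[symmetric] epsq
    by (rule binom_dp) (use assms tl tm n' in auto)
qed


end
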